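(* Consider $\mathbb{R}$ as an SSD space with the bilinear form $\lfloor x,y\rfloor=xy$, so $q(x)=\frac12x^2$. For a nonempty set $A\subset\mathbb{R}$, one has $A=G_{\Phi_A}$ if and only if $A$ is closed and convex.
   Context: For nonempty $A\subset\mathbb{R}$, $\Phi_A(x)=\sup_{a\in A}\{xa-\frac12a^2\}$. For a proper convex $f:\mathbb{R}\to\mathbb{R}\cup\{+\infty\}$, $f^{@}(b)=\sup_{c\in\mathbb{R}}\{cb-f(c)\}$ and $G_f=\{b\in\mathbb{R}: f(b)+f^{@}(b)=b^2\}$. *)

theory Defs
  imports "HOL-Analysis.Analysis"
begin

definition PhiA :: "real set \<Rightarrow> real \<Rightarrow> ereal" where
  "PhiA A x = (SUP a\<in>A. ereal (x * a - a\<^sup>2 / 2))"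

definition fconj :: "(real \<Rightarrow> ereal) \<Rightarrow> real \<Rightarrow> ereal" where
  "fconj f b = (SUP c. ereal (c * b) - f c)"

definition Gset :: "(real \<Rightarrow> ereal) \<Rightarrow> real set" where
  "Gset f = {b. f b + fconj f b = ereal (b\<^sup>2)}"

end

theory Submission
  imports Defs
begin

definition phi :: "real set \<Rightarrow> real \<Rightarrow> real" where
  "phi A x = real_of_ereal (PhiA A x)"

lemma sq_bound: "x * a - a\<^sup>2 / 2 \<le> (x::real)\<^sup>2 / 2"
proof -
  have "0 \<le> (x - a)\<^sup>2" by simp
  thus ?thesis by (simp add: power2_eq_square algebra_simps)
qed

lemma PhiA_eq:
  assumes "A \<noteq> {}"
  shows "PhiA A x = ereal (phi A x)"
proof -
  obtain a0 where a0: "a0 \<in> A" using assms by blast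
  have "ereal (x * a0 - a0\<^sup>2 / 2) \<le> PhiA A x"
    unfolding PhiA_def using a0 by (rule SUP_upper)
  moreover have "PhiA A x \<le> ereal (x\<^sup>2 / 2)"
    unfolding PhiA_def by (rule SUP_least) (metis ereal_less_eq(3) sq_bound)
  ultimately have "\<bar>PhiA A x\<bar> \<noteq> \<infinity>" by auto
  thus ?thesis unfolding phi_def by (simp add: ereal_real)
qed

lemma phi_ge:
  assumes "a \<in> A"
  shows "x * a - a\<^sup>2 / 2 \<le> phi A x"
proof -
  have "ereal (x * a - a\<^sup>2 / 2) \<le> PhiA A x"
    unfolding PhiA_def using assms by (rule SUP_upper)
  thus ?thesis using PhiA_eq[of A x] assms by (metis empty_iff ereal_less_eq(3))
qed

lemma phi_le:
  assumes "A \<noteq> {}" "\<And>a. a \<in> A \<Longrightarrow> x * a - a\<^sup>2 / 2 \<le> M"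
  shows "phi A x \<le> M"
proof -
  have "PhiA A x \<le> ereal M"
    unfolding PhiA_def by (rule SUP_least) (simp add: assms(2))
  thus ?thesis using PhiA_eq[OF assms(1), of x] by auto
qed

lemma G_iff:
  assumes "A \<noteq> {}"
  shows "b \<in> Gset (PhiA A) \<longleftrightarrow> (\<forall>c. c * b - phi A c \<le> b\<^sup>2 - phi A b)"
proof -
  define S where "S = (SUP c. ereal (c * b - phi A c))"
  have fc: "fconj (PhiA A) b = S"
    unfolding fconj_def S_def PhiA_eq[OF assms] by simp
  have low: "ereal (b\<^sup>2 - phi A b) \<le> S"
    unfolding S_def by (rule SUP_upper2[of b]) (auto simp: power2_eq_square)
  have "S = ereal (b\<^sup>2 - phi A b) \<longleftrightarrow> (\<forall>c. c * b - phi A c \<le> b\<^sup>2 - phi A b)"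
  proof
    assume Seq: "S = ereal (b\<^sup>2 - phi A b)"
    show "\<forall>c. c * b - phi A c \<le> b\<^sup>2 - phi A b"
    proof
      fix c
      have "ereal (c * b - phi A c) \<le> S" unfolding S_def by (rule SUP_upper) simp
      thus "c * b - phi A c \<le> b\<^sup>2 - phi A b" using Seq by simp
    qed
  next
    assume h: "\<forall>c. c * b - phi A c \<le> b\<^sup>2 - phi A b"
    have "S \<le> ereal (b\<^sup>2 - phi A b)"
      unfolding S_def by (rule SUP_least) (simp add: h)
    thus "S = ereal (b\<^sup>2 - phi A b)" using low by simp
  qed
  moreover have "ereal (phi A b) + S = ereal (b\<^sup>2) \<longleftrightarrow> S = ereal (b\<^sup>2 - phi A b)"
  proof (cases S)
    case (real r)
    then show ?thesis by (auto simp: algebra_simps)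
  qed auto
  ultimately show ?thesis
    unfolding Gset_def mem_Collect_eq fc unfolding PhiA_eq[OF assms] by simp
qed

lemma A_sub_G:
  assumes "A \<noteq> {}" "b \<in> closure A"
  shows "b \<in> Gset (PhiA A)"
proof -
  have "\<forall>c. c * b - phi A c \<le> b\<^sup>2 - phi A b"
  proof
    fix c
    have "A \<subseteq> {a. c * a - a\<^sup>2 / 2 \<le> phi A c}" using phi_ge by blast
    moreover have "closed {a. c * a - a\<^sup>2 / 2 \<le> phi A c}"
      by (intro closed_Collect_le continuous_intros) auto
    ultimately have "closure A \<subseteq> {a. c * a - a\<^sup>2 / 2 \<le> phi A c}"
      by (rule closure_minimal)
    hence 1: "c * b - b\<^sup>2 / 2 \<le> phi A c" using assms(2) by blast
    have 2: "phi A b \<le> b\<^sup>2 / 2" by (rule phi_le[OF assms(1)]) (rule sq_bound)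
    show "c * b - phi A c \<le> b\<^sup>2 - phi A b" using 1 2 by linarith
  qed
  thus ?thesis using G_iff[OF assms(1)] by blast
qed

lemma G_sub_A:
  assumes "A \<noteq> {}" "closed A" "convex A" "b \<in> Gset (PhiA A)"
  shows "b \<in> A"
proof (rule ccontr)
  assume nb: "b \<notin> A"
  have iv: "is_interval A" using assms(3) is_interval_convex_1 by blast
  have side: "(\<forall>a\<in>A. b < a) \<or> (\<forall>a\<in>A. a < b)"
  proof (rule ccontr)
    assume "\<not> ?thesis"
    then obtain a1 a2 where "a1 \<in> A" "a2 \<in> A" "a1 \<le> b" "b \<le> a2" by (meson not_less)
    thus False using iv nb unfolding is_interval_1 by blast
  qed
  have G: "\<forall>c. c * b - phi A c \<le> b\<^sup>2 - phi A b" using G_iff[OF assms(1)] assms(4) by blast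
  show False using side
  proof
    assume ab: "\<forall>a\<in>A. b < a"
    define p where "p = Inf A"
    have pA: "p \<in> A" unfolding p_def
      by (rule closed_contains_Inf[OF assms(1) _ assms(2)])
         (meson ab bdd_below.I less_imp_le)
    have pl: "\<And>a. a \<in> A \<Longrightarrow> p \<le> a" unfolding p_def
      by (meson ab bdd_below.I cInf_lower less_imp_le)
    have pb: "b < p" using ab pA by blast
    define c where "c = b - 1"
    have 1: "phi A c \<le> c * p - p\<^sup>2 / 2"
    proof (rule phi_le[OF assms(1)])
      fix a assume "a \<in> A"
      hence "p \<le> a" by (rule pl)
      hence "c * (a - p) \<le> (a + p) / 2 * (a - p)" using pb unfolding c_def
        by (intro mult_right_mono) auto
      thus "c * a - a\<^sup>2 / 2 \<le> c * p - p\<^sup>2 / 2"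
        by (simp add: power2_eq_square algebra_simps diff_divide_distrib add_divide_distrib)
    qed
    have 2: "b * p - p\<^sup>2 / 2 \<le> phi A b" using phi_ge[OF pA] .
    have 3: "c * b - phi A c \<le> b\<^sup>2 - phi A b" using G by blast
    have "c * b - c * p > b\<^sup>2 - b * p" using pb unfolding c_def
      by (simp add: power2_eq_square algebra_simps)
    thus False using 1 2 3 by linarith
  next
    assume ab: "\<forall>a\<in>A. a < b"
    define p where "p = Sup A"
    have pA: "p \<in> A" unfolding p_def
      by (rule closed_contains_Sup[OF assms(1) _ assms(2)])
         (meson ab bdd_above.I less_imp_le)
    have pl: "\<And>a. a \<in> A \<Longrightarrow> a \<le> p" unfolding p_def
      by (meson ab bdd_above.I cSup_upper less_imp_le)
    have pb: "p < b" using ab pA by blast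
    define c where "c = b + 1"
    have 1: "phi A c \<le> c * p - p\<^sup>2 / 2"
    proof (rule phi_le[OF assms(1)])
      fix a assume "a \<in> A"
      hence "a \<le> p" by (rule pl)
      hence "c * (p - a) \<ge> (a + p) / 2 * (p - a)" using pb unfolding c_def
        by (intro mult_right_mono) auto
      thus "c * a - a\<^sup>2 / 2 \<le> c * p - p\<^sup>2 / 2"
        by (simp add: power2_eq_square algebra_simps diff_divide_distrib add_divide_distrib)
    qed
    have 2: "b * p - p\<^sup>2 / 2 \<le> phi A b" using phi_ge[OF pA] .
    have 3: "c * b - phi A c \<le> b\<^sup>2 - phi A b" using G by blast
    have "c * b - c * p > b\<^sup>2 - b * p" using pb unfolding c_def
      by (simp add: power2_eq_square algebra_simps)
    thus False using 1 2 3 by linarith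
  qed
qed

lemma gap_mid:
  assumes "A \<noteq> {}" "l \<in> A" "u \<in> A" "l < u"
    and gap: "\<And>a. a \<in> A \<Longrightarrow> a \<le> l \<or> u \<le> a"
  shows "(l + u) / 2 \<in> Gset (PhiA A)"
proof -
  define m where "m = (l + u) / 2"
  define r where "r = (u - l) / 2"
  have lr: "l = m - r" "u = m + r" unfolding m_def r_def by (simp_all add: field_simps)
  have r0: "r > 0" unfolding r_def using assms by simp
  have pm: "phi A m \<le> m\<^sup>2 / 2 - r\<^sup>2 / 2"
  proof (rule phi_le[OF assms(1)])
    fix a assume aA: "a \<in> A"
    have "r\<^sup>2 \<le> (a - m)\<^sup>2"
    proof -
      have "r \<le> \<bar>a - m\<bar>" using gap[OF aA] lr by auto
      thus ?thesis using r0 by (metis abs_of_pos power2_abs abs_le_square_iff)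
    qed
    thus "m * a - a\<^sup>2 / 2 \<le> m\<^sup>2 / 2 - r\<^sup>2 / 2"
      by (simp add: power2_eq_square algebra_simps)
  qed
  have "\<forall>c. c * m - phi A c \<le> m\<^sup>2 - phi A m"
  proof
    fix c
    have hl: "c * l - l\<^sup>2 / 2 \<le> phi A c" using phi_ge[OF assms(2)] .
    have hu: "c * u - u\<^sup>2 / 2 \<le> phi A c" using phi_ge[OF assms(3)] .
    show "c * m - phi A c \<le> m\<^sup>2 - phi A m"
    proof (cases "c \<le> m")
      case True
      have "c * m - (c * l - l\<^sup>2 / 2) \<le> m\<^sup>2 / 2 + r\<^sup>2 / 2"
      proof -
        have "c * r \<le> m * r" using True r0 by (intro mult_right_mono) auto
        thus ?thesis unfolding lr by (simp add: power2_eq_square algebra_simps diff_divide_distrib add_divide_distrib)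
      qed
      thus ?thesis using hl pm by linarith
    next
      case False
      have "c * m - (c * u - u\<^sup>2 / 2) \<le> m\<^sup>2 / 2 + r\<^sup>2 / 2"
      proof -
        have "m * r \<le> c * r" using False r0 by (intro mult_right_mono) auto
        thus ?thesis unfolding lr by (simp add: power2_eq_square algebra_simps diff_divide_distrib add_divide_distrib)
      qed
      thus ?thesis using hu pm by linarith
    qed
  qed
  thus ?thesis using G_iff[OF assms(1)] unfolding m_def by blast
qed

theorem mainTheorem20:
  fixes A :: "real set"
  assumes "A \<noteq> {}"
  shows "A = Gset (PhiA A) \<longleftrightarrow> closed A \<and> convex A"
proof
  assume eq: "A = Gset (PhiA A)"
  have cl: "closed A"
  proof -
    have "closure A \<subseteq> A" using A_sub_G[OF assms] eq by blast
    thus ?thesis using closure_subset_eq by blast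
  qed
  have "is_interval A" unfolding is_interval_1
  proof (intro ballI allI impI)
    fix a1 a2 x assume a1: "a1 \<in> A" and a2: "a2 \<in> A" and x: "a1 \<le> x \<and> x \<le> a2"
    show "x \<in> A"
    proof (rule ccontr)
      assume nx: "x \<notin> A"
      define L where "L = A \<inter> {..x}"
      define U where "U = A \<inter> {x..}"
      have cL: "closed L" "closed U" unfolding L_def U_def using cl by auto
      have neL: "L \<noteq> {}" "U \<noteq> {}" using a1 a2 x unfolding L_def U_def by auto
      have bL: "bdd_above L" unfolding L_def by (meson IntD2 atMost_iff bdd_above.I)
      have bU: "bdd_below U" unfolding U_def by (meson IntD2 atLeast_iff bdd_below.I)
      define l where "l = Sup L"
      define u where "u = Inf U"
      have lL: "l \<in> L" unfolding l_def using closed_contains_Sup neL bL cL by blast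
      have uU: "u \<in> U" unfolding u_def using closed_contains_Inf neL bU cL by blast
      have lA0: "l \<in> A" "l \<le> x" using lL unfolding L_def by auto
      have uA0: "u \<in> A" "x \<le> u" using uU unfolding U_def by auto
      have lA: "l \<in> A" "l < x" using lA0 nx by (metis order_le_less)+
      have uA: "u \<in> A" "x < u" using uA0 nx by (metis order_le_less)+
      have gap: "a \<le> l \<or> u \<le> a" if "a \<in> A" for a
      proof (cases "a \<le> x")
        case True
        hence "a \<in> L" using that unfolding L_def by auto
        thus ?thesis unfolding l_def using bL cSup_upper by blast
      next
        case False
        hence "a \<in> U" using that unfolding U_def by auto
        thus ?thesis unfolding u_def using bU cInf_lower by blast
      qed
      have lu: "l < u" using lA uA by linarith
      have "(l + u) / 2 \<in> A"
        using gap_mid[OF assms lA(1) uA(1) lu gap] eq by blast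
      from gap[OF this] show False using lu by (auto simp: field_simps)
    qed
  qed
  thus "closed A \<and> convex A" using cl is_interval_convex_1 by blast
next
  assume h: "closed A \<and> convex A"
  show "A = Gset (PhiA A)"
    using A_sub_G[OF assms] G_sub_A[OF assms] h closure_subset by blast
qed

end
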